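(* Let $\mu_1,\mu_2>0$ with $\mu_1+\mu_2=1$ and $\mu_1\le\mu_2$. Put $$e=\frac{\sqrt{(\mu_1/\mu_2)^4+8(\mu_1/\mu_2)^2}-(\mu_1/\mu_2)^2}{4},\qquad \sigma=\sigma(\mu_1,\mu_2)=-\frac{(1-e^2)(\mu_1^2+\mu_2^2e)^2}{2\mu_2e^2}.$$ Consider the planar orbital dynamics described in the context, started from two intersecting elliptic co-focal Keplerian orbits $o_1,o_2$ with $E<0$. If initially $EL^2<\sigma$, then for every possible evolution (every choice of collision points, impact directions $\mathbf n$ and number of collisions) the orbits remain elliptic for all times. Moreover, along every evolution $|L_1|$ and $|L_2|$ stay bounded and $e_i\le c_i<1$ ($i=1,2$) for suitable constants $c_1,c_2$.
   Context: Units are chosen so that a particle at position $\mathbf x\in\mathbb R^2\setminus\{0\}$ undergoes Keplerian motion about the origin with acceleration $-\mathbf x/|\mathbf x|^3$. For a particle $i$ at position $\mathbf x_i$ with velocity $\mathbf v_i$, its specific energy is $E_i=|\mathbf v_i|^2/2-1/|\mathbf x_i|$, its (signed) specific angular momentum is $L_i=x_{i,1}v_{i,2}-x_{i,2}v_{i,1}$, and its eccentricity is $e_i=\sqrt{1+2E_iL_i^2}$; these are constant along the Keplerian orbit $o_i$ determined by $(\mathbf x_i,\mathbf v_i)$, which is elliptic iff $E_i<0$. Two point particles have masses $m_1,m_2$, $M=m_1+m_2$, $\mu_i=m_i/M$. Set $E=\mu_1E_1+\mu_2E_2$ and $L=\mu_1L_1+\mu_2L_2$. Orbital dynamics: the state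 is a pair of coplanar Keplerian orbits $o_1,o_2$ with common focus at the origin that intersect. One step: choose a point $\mathbf x$ of $o_1\cap o_2$; let $\mathbf v_1,\mathbf v_2$ be the velocities of particles moving on $o_1,o_2$ when at $\mathbf x$; choose a unit vector $\mathbf n$ with $\mathbf n\cdot\mathbf w<0$ where $\mathbf w=\mathbf v_1-\mathbf v_2$; set $\mathbf w'=(I-\mathbf n\otimes\mathbf n)\mathbf w-(1-2\varepsilon)(\mathbf n\otimes\mathbf n)\mathbf w$ with inelasticity parameter $\varepsilon\in[0,1/2]$ ($\varepsilon=0$: elastic collision), where $(\mathbf n\otimes\mathbf n)\mathbf w=(\mathbf n\cdot\mathbf w)\mathbf n$; with $\mathbf v=\mu_1\mathbf v_1+\mu_2\mathbf v_2$ set $\mathbf v_1'=\mathbf v+\mu_2\mathbf w'$, $\mathbf v_2'=\mathbf v-\mu_1\mathbf w'$. The new orbits $o_1',o_2'$ are the Keplerian orbits through $\mathbf x$ with velocities $\mathbf v_1',\mathbf v_2'$. Steps are iterated arbitrarily. The total $L$ is conserved and $E$ does not increase at each step. *)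

theory Defs
  imports "HOL-Analysis.Analysis"
begin

definition kep_energy :: "real^2 \<Rightarrow> real^2 \<Rightarrow> real" where
  "kep_energy x v = (norm v)^2 / 2 - 1 / norm x"

definition kep_angmom :: "real^2 \<Rightarrow> real^2 \<Rightarrow> real" where
  "kep_angmom x v = x$1 * v$2 - x$2 * v$1"

definition kep_ecc :: "real^2 \<Rightarrow> real^2 \<Rightarrow> real" where
  "kep_ecc x v = sqrt (1 + 2 * kep_energy x v * (kep_angmom x v)^2)"

text \<open>Laplace--Runge--Lenz vector (planar form of v \<times> L - x/|x|).\<close>
definition kep_lrl :: "real^2 \<Rightarrow> real^2 \<Rightarrow> real^2" where
  "kep_lrl x v = ((norm v)^2 - 1 / norm x) *\<^sub>R x - (x \<bullet> v) *\<^sub>R v"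

text \<open>The Keplerian orbit determined by (x,v), as the set of phase states
  (position, velocity) of a particle moving along it: the states sharing the
  conserved quantities energy, angular momentum and Laplace--Runge--Lenz vector.\<close>
definition kep_orbit :: "real^2 \<Rightarrow> real^2 \<Rightarrow> ((real^2) \<times> (real^2)) set" where
  "kep_orbit x v = {(y, w). y \<noteq> 0 \<and> kep_energy y w = kep_energy x v
      \<and> kep_angmom y w = kep_angmom x v \<and> kep_lrl y w = kep_lrl x v}"

text \<open>One collision step of the orbital dynamics, with mass fractions mu1, mu2
  and inelasticity parameter eps.\<close>
definition orb_step :: "real \<Rightarrow> real \<Rightarrow> real \<Rightarrow>
    (((real^2) \<times> (real^2)) set \<times> ((real^2) \<times> (real^2)) set) \<Rightarrow>
    (((real^2) \<times> (real^2)) set \<times> ((real^2) \<times> (real^2)) set) \<Rightarrow> bool" where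
  "orb_step mu1 mu2 eps S S' \<longleftrightarrow>
     (\<exists>x v1 v2 n. (x, v1) \<in> fst S \<and> (x, v2) \<in> snd S \<and> norm n = 1 \<and>
        n \<bullet> (v1 - v2) < 0 \<and>
        (let w = v1 - v2;
             w' = (w - (n \<bullet> w) *\<^sub>R n) - (1 - 2 * eps) *\<^sub>R ((n \<bullet> w) *\<^sub>R n);
             v = mu1 *\<^sub>R v1 + mu2 *\<^sub>R v2
         in S' = (kep_orbit x (v + mu2 *\<^sub>R w'), kep_orbit x (v - mu1 *\<^sub>R w'))))"

end

theory Submission
  imports Defs
begin


lemma radial:
  fixes a b P1 P2 b2 :: real
  assumes "a>0" "b>0" "b2^2 \<le> P2" "P1 \<ge> 0" "1 - (a*P1+b*P2)/2 > 0"
  shows "(1 - (a*P1+b*P2)/2) * (b*b2)^2 \<le> b/2"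
proof -
  define D where "D = 1 - (a*P1+b*P2)/2"
  define t where "t = b*b2^2"
  have t0: "t \<ge> 0" using assms unfolding t_def by simp
  have "a*P1 \<ge> 0" using assms by simp
  moreover have "b*P2 \<ge> t" unfolding t_def using assms by (simp add: mult_left_mono)
  ultimately have Dle: "D \<le> 1 - t/2" unfolding D_def by simp
  have "D * (b*b2)^2 = D * (b*t)" unfolding t_def by (simp add: power2_eq_square)
  also have "\<dots> \<le> (1 - t/2) * (b*t)" using Dle t0 assms by (intro mult_right_mono) auto
  also have "\<dots> = b * ((1-t/2)*t)" by simp
  also have "\<dots> \<le> b * (1/2)"
  proof -
    have "(1-t/2)*t \<le> 1/2" using sum_squares_ge_zero[of "t-1" 0]
      by (simp add: algebra_simps power2_eq_square)
    then show ?thesis using assms by (intro mult_left_mono) auto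
  qed
  finally show ?thesis unfolding D_def by simp
qed

lemma escape:
  fixes a b P1 P2 b1 b2 y :: real
  assumes "a>0" "b>0" "a+b=1" "0<y" "y\<le>1" "b1^2 \<le> P1" "b2^2 \<le> P2" "P1 \<ge> 2"
    "1 - (a*P1+b*P2)/2 > 0"
  shows "(1 - (a*P1+b*P2)/2) * (a*b1+b*b2)^2 \<le> (a/y+b)*(b+y*a)^2/2"
proof -
  define D where "D = 1 - (a*P1+b*P2)/2"
  have D0: "D > 0" using assms D_def by simp
  have cs: "(a*b1+b*b2)^2 \<le> (a*y*b1^2 + b*b2^2)*(a/y+b)"
  proof -
    have "(a*y*b1^2 + b*b2^2)*(a/y+b) - (a*b1+b*b2)^2 = a*b*(y*b1-b2)^2/y"
      using assms by (simp add: field_simps power2_eq_square)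
    moreover have "a*b*(y*b1-b2)^2/y \<ge> 0" using assms by simp
    ultimately show ?thesis by linarith
  qed
  have pos: "a/y+b > 0" using assms by (simp add: add_pos_pos)
  have "(a*y*b1^2 + b*b2^2) \<le> (y*(a*P1) + b*P2)"
    using assms by (intro add_mono) (auto simp: mult_left_mono)
  hence cs2: "(a*b1+b*b2)^2 \<le> (y*(a*P1) + b*P2)*(a/y+b)"
    using cs pos by (meson dual_order.trans mult_right_mono less_imp_le)
  define X where "X = a*P1"
  define Y where "Y = b*P2"
  have X2: "X \<ge> 2*a" unfolding X_def using assms by simp
  have "D*(y*X+Y) = D*(X+Y) - (1-y)*X*D" by (simp add: algebra_simps)
  also have "\<dots> \<le> D*(X+Y) - (1-y)*(2*a)*D"
    using X2 D0 assms by (simp add: mult_right_mono mult_left_mono)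
  also have "\<dots> = D*((X+Y) - 2*(1-y)*a)" by (simp add: algebra_simps)
  also have "\<dots> = (1-(X+Y)/2)*((X+Y) - 2*(1-y)*a)" unfolding D_def X_def Y_def by simp
  also have "\<dots> \<le> (b+y*a)^2/2"
  proof -
    define S where "S = X+Y"
    define c where "c = 2*(1-y)*a"
    have h: "2 - c = 2*(b+y*a)" unfolding c_def using assms by (simp add: algebra_simps)
    have p2: "(2-c)^2 = 4*(b+y*a)^2" unfolding h by (simp only: power_mult_distrib) simp
    have "4*((2-S)*(S-c)) \<le> (2-c)^2" using sum_squares_ge_zero[of "(2-S)-(S-c)" 0]
      by (simp add: algebra_simps power2_eq_square)
    hence "4*((2-S)*(S-c)) \<le> 4*(b+y*a)^2" using p2 by linarith
    hence "(2-S)*(S-c) \<le> (b+y*a)^2" by simp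
    moreover have "(1-S/2)*(S-c) = (2-S)*(S-c)/2" by (simp add: field_simps)
    ultimately have "(1-S/2)*(S-c) \<le> (b+y*a)^2/2" by linarith
    thus ?thesis unfolding S_def c_def by simp
  qed
  finally have k: "D*(y*X+Y) \<le> (b+y*a)^2/2" .
  have "D * (a*b1+b*b2)^2 \<le> D * ((y*X+Y)*(a/y+b))" using cs2 D0 unfolding X_def Y_def
    by (simp add: mult_left_mono)
  also have "\<dots> = (D*(y*X+Y))*(a/y+b)" by simp
  also have "\<dots> \<le> (b+y*a)^2/2*(a/y+b)" using pos by (intro mult_right_mono[OF k]) simp
  finally show ?thesis unfolding D_def by (simp add: mult.commute)
qed

lemma convex_sq:
  fixes a b b1 b2 :: real
  assumes "a+b=1"
  shows "(a*b1+b*b2)^2 = a*b1^2 + b*b2^2 - a*b*(b1-b2)^2"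
proof -
  have b: "b = 1 - a" using assms by simp
  show ?thesis unfolding b by (simp add: algebra_simps power2_eq_square)
qed

lemma quant:
  fixes a b S g y P1 P2 b1 b2 :: real
  assumes ab: "a>0" "b>0" "a+b=1" and y: "0<y" "y\<le>1" and g: "g>0"
    and S1: "b/2 \<le> S" and S2: "(a/y+b)*(b+y*a)^2/2 \<le> S"
    and P: "b1^2 \<le> P1" "b2^2 \<le> P2"
    and big: "(1 - (a*P1+b*P2)/2) * (a*b1+b*b2)^2 \<ge> S + g"
  shows "(P1/2 - 1)*b1^2 \<le> -((g/4)*(min 1 (g/10))^2)"
proof (rule ccontr)
  define D where "D = 1 - (a*P1+b*P2)/2"
  define M where "M = a*b1+b*b2"
  define \<eta> where "\<eta> = g/4"
  define \<zeta> where "\<zeta> = min 1 (g/10)"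
  assume "\<not> (P1/2 - 1)*b1^2 \<le> -((g/4)*(min 1 (g/10))^2)"
  hence neg: "(P1/2 - 1)*b1^2 > -(\<eta>*\<zeta>^2)" unfolding \<eta>_def \<zeta>_def by simp
  have S0: "S \<ge> 0" using S1 ab by simp
  have big': "D*M^2 \<ge> S + g" using big unfolding D_def M_def .
  have M2: "M^2 \<le> a*P1 + b*P2"
  proof -
    have "M^2 = a*b1^2 + b*b2^2 - a*b*(b1-b2)^2" unfolding M_def using convex_sq[OF ab(3)] .
    moreover have "a*b*(b1-b2)^2 \<ge> 0" using ab by simp
    moreover have "a*b1^2 \<le> a*P1" "b*b2^2 \<le> b*P2" using ab P by (auto intro: mult_left_mono)
    ultimately show ?thesis by linarith
  qed
  have D0: "D > 0"
  proof (rule ccontr)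
    assume "\<not> D > 0"
    hence "D*M^2 \<le> 0" by (simp add: mult_nonpos_nonneg)
    thus False using big' S0 g by linarith
  qed
  have Z2: "a*P1+b*P2 < 2" using D0 unfolding D_def by simp
  have M2b: "M^2 \<le> 2" using M2 Z2 by linarith
  have D1: "D \<le> 1"
  proof -
    have "a*P1 \<ge> 0" "b*P2 \<ge> 0" using ab P order_trans[OF zero_le_power2 P(1)] order_trans[OF zero_le_power2 P(2)] by auto
    thus ?thesis unfolding D_def by simp
  qed
  have eta0: "\<eta> > 0" unfolding \<eta>_def using g by simp
  have zeta0: "\<zeta> > 0" "\<zeta> \<le> 1" "5*\<zeta> \<le> g/2" unfolding \<zeta>_def using g by auto
  show False
  proof (cases "P1 \<ge> 2 - 2*\<eta>")
    case True
    define P1' where "P1' = max P1 2"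
    define D' where "D' = 1 - (a*P1'+b*P2)/2"
    have "P1' - P1 \<le> 2*\<eta>" unfolding P1'_def using True eta0 by (simp add: max_def)
    hence "a*(P1' - P1) \<le> a*(2*\<eta>)" using ab by (intro mult_left_mono) auto
    also have "\<dots> \<le> 2*\<eta>" using ab eta0 by simp
    finally have DD0: "a*(P1' - P1) \<le> 2*\<eta>" .
    have "D - D' = a*(P1'-P1)/2" unfolding D_def D'_def by (simp add: field_simps)
    hence DD': "D - D' \<le> \<eta>" using DD0 by simp
    have "D - D' \<ge> 0" unfolding D_def D'_def P1'_def using ab by (simp add: mult_left_mono)
    show False
    proof (cases "D' > 0")
      case True
      have "D'*M^2 \<le> (a/y+b)*(b+y*a)^2/2" unfolding D'_def M_def
        by (rule escape[OF ab y]) (use P True in \<open>auto simp: D'_def P1'_def\<close>)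
      moreover have "(D-D')*M^2 \<le> \<eta>*2" using DD' M2b \<open>D - D' \<ge> 0\<close> eta0
        by (intro mult_mono) auto
      moreover have "D*M^2 = D'*M^2 + (D-D')*M^2" by (simp add: algebra_simps)
      ultimately have "D*M^2 \<le> S + g/2" using S2 unfolding \<eta>_def by linarith
      thus False using big' g by linarith
    next
      case False
      hence "D \<le> \<eta>" using DD' by linarith
      hence "D*M^2 \<le> \<eta>*2" using M2b D0 by (intro mult_mono) auto
      thus False using big' g S0 unfolding \<eta>_def by linarith
    qed
  next
    case False
    hence "P1/2 - 1 < -\<eta>" by simp
    hence "(P1/2 - 1)*b1^2 \<le> -\<eta>*b1^2" by (intro mult_right_mono) auto
    hence "\<eta>*b1^2 < \<eta>*\<zeta>^2" using neg by linarith
    hence "b1^2 < \<zeta>^2" using eta0 by simp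
    hence ab1: "\<bar>b1\<bar> < \<zeta>" using zeta0 by (metis abs_of_pos power2_less_imp_less abs_ge_zero real_sqrt_abs real_sqrt_less_iff)
    have P10: "P1 \<ge> 0" using P order_trans[OF zero_le_power2] by blast
    have rad: "D*(b*b2)^2 \<le> b/2" unfolding D_def by (rule radial) (use ab P P10 D0 in \<open>auto simp: D_def\<close>)
    have bb2: "\<bar>b*b2\<bar> \<le> 2"
    proof -
      have "(b*b2)^2 = b*(b*b2^2)" by (simp add: power2_eq_square)
      also have "\<dots> \<le> 1*(b*P2)" using ab P by (intro mult_mono) (auto intro: mult_left_mono)
      also have "\<dots> \<le> 2"
      proof -
        have "a*P1 \<ge> 0" using ab P10 by simp
        thus ?thesis using Z2 by simp
      qed
      finally have "(b*b2)^2 \<le> 2^2" by simp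
      thus ?thesis using abs_le_square_iff by (metis abs_numeral)
    qed
    have "D*M^2 - D*(b*b2)^2 = D*a*b1*(a*b1 + 2*(b*b2))" unfolding M_def by (simp add: algebra_simps power2_eq_square)
    also have "\<dots> \<le> \<bar>D*a*b1*(a*b1 + 2*(b*b2))\<bar>" by simp
    also have "\<dots> = (D*a)*(\<bar>b1\<bar>*\<bar>a*b1 + 2*(b*b2)\<bar>)" using D0 ab by (simp add: abs_mult)
    also have "\<dots> \<le> 1*(\<zeta>*(\<zeta>+4))"
    proof (rule mult_mono)
      show "D*a \<le> 1" using D0 D1 ab by (simp add: mult_le_one)
      have "\<bar>a*b1 + 2*(b*b2)\<bar> \<le> \<bar>b1\<bar> + 4"
      proof -
        have "\<bar>a*b1\<bar> \<le> \<bar>b1\<bar>" using ab by (simp add: abs_mult mult_left_le_one_le)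
        thus ?thesis using bb2 by linarith
      qed
      also have "\<dots> \<le> \<zeta> + 4" using ab1 by simp
      finally have h: "\<bar>a*b1 + 2*(b*b2)\<bar> \<le> \<zeta> + 4" .
      show "\<bar>b1\<bar>*\<bar>a*b1 + 2*(b*b2)\<bar> \<le> \<zeta>*(\<zeta>+4)" using ab1 h by (intro mult_mono) auto
    qed (use zeta0 in auto)
    also have "\<dots> \<le> 5*\<zeta>" using zeta0 by (simp add: algebra_simps power2_eq_square mult_left_le_one_le)
    finally have "D*M^2 \<le> S + g/2" using rad S1 zeta0 by linarith
    thus False using big' g by linarith
  qed
qed



lemma poly_rad:
  fixes a b y :: real
  assumes "a \<ge> 0" "a \<le> 1/2" "b = 1 - a" "0 < y" "y \<le> 1"
  shows "b*y \<le> (a+b*y)*(b+a*y)^2"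
proof -
  define z where "z = 1 - y"
  have id: "(a+b*y)*(b+a*y)^2 - b*y = a*(y*(2*y-1+a*z^2) + z*(1-a*z)^2)"
    unfolding z_def assms(3) by (simp add: algebra_simps power2_eq_square)
  have "y*(2*y-1+a*z^2) + z*(1-a*z)^2 \<ge> 0"
  proof (cases "y \<ge> 1/2")
    case True
    have "a*z^2 \<ge> 0" using assms by simp
    hence "2*y-1+a*z^2 \<ge> 0" using True by linarith
    moreover have "z*(1-a*z)^2 \<ge> 0" unfolding z_def using assms by simp
    ultimately show ?thesis using assms by simp
  next
    case False
    have q: "y*(2*y-1) \<ge> -1/8" using sum_squares_ge_zero[of "y - 1/4" 0]
      by (simp add: algebra_simps power2_eq_square)
    have "y*(a*z^2) \<ge> 0" using assms by simp
    have s2: "z \<ge> 1/2" "z \<le> 1" unfolding z_def using False assms by auto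
    have "a*z \<le> 1/2" using s2 assms by (metis mult_mono mult.right_neutral dual_order.trans order_refl less_eq_real_def)
    hence "1 - a*z \<ge> 1/2" by simp
    hence "(1-a*z)^2 \<ge> (1/2)^2" by (intro power_mono) auto
    hence "z*(1-a*z)^2 \<ge> (1/2)*(1/4)" using s2 by (intro mult_mono) (auto simp: power2_eq_square)
    hence "y*(2*y-1+a*z^2) + z*(1-a*z)^2 \<ge> -1/8 + 0 + 1/8" using q \<open>y*(a*z^2) \<ge> 0\<close>
      by (simp add: algebra_simps)
    thus ?thesis by simp
  qed
  hence "(a+b*y)*(b+a*y)^2 - b*y \<ge> 0" unfolding id using assms by simp
  thus ?thesis by simp
qed

lemma cst_facts:
  fixes mu1 mu2 :: real
  assumes m: "mu1 > 0" "mu2 > 0" "mu1 + mu2 = 1" "mu1 \<le> mu2"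
  defines "q \<equiv> mu1 / mu2"
  defines "e \<equiv> (sqrt (q^4 + 8 * q^2) - q^2) / 4"
  defines "S \<equiv> ((1 - e^2) * (mu1^2 + mu2^2 * e)^2) / (2 * mu2 * e^2)"
  shows "\<exists>y. 0 < y \<and> y \<le> 1 \<and> mu2/2 \<le> S \<and> mu1/2 \<le> S \<and>
     (mu1/y+mu2)*(mu2+y*mu1)^2/2 \<le> S \<and> (mu2/y+mu1)*(mu1+y*mu2)^2/2 \<le> S"
proof -
  have q0: "q > 0" unfolding q_def using m by simp
  define R where "R = sqrt (q^4 + 8 * q^2)"
  have R0: "R \<ge> 0" unfolding R_def by simp
  have R2: "R^2 = q^4 + 8*q^2" unfolding R_def by (simp add: add_nonneg_nonneg)
  have "R^2 > (q^2)^2" using R2 q0 by (simp add: power_mult_distrib[symmetric] flip: power_mult)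
  hence "R > q^2" using R0 by (rule power2_less_imp_less)
  hence e0: "e > 0" unfolding e_def R_def[symmetric] by simp
  have "4*e + q^2 = R" unfolding e_def R_def by (simp add: field_simps)
  hence "(4*e + q^2)^2 = q^4 + 8*q^2" using R2 by simp
  hence rel: "2*e^2 + e*q^2 = q^2" by (simp add: algebra_simps power2_eq_square power4_eq_xxxx)
  define y where "y = e/q"
  have y0: "y > 0" unfolding y_def using e0 q0 by simp
  have rely: "2*y^2 + q*y = 1"
  proof -
    have "q^2*(2*y^2 + q*y) = 2*e^2 + e*q^2" unfolding y_def using q0 by (simp add: field_simps power2_eq_square)
    hence "q^2*(2*y^2 + q*y) = q^2*1" using rel by simp
    thus ?thesis using q0 by simp
  qed
  have y1: "y \<le> 1"
  proof (rule ccontr)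
    assume "\<not> y \<le> 1"
    hence "y^2 > 1" by (simp add: one_less_power)
    moreover have "q*y > 0" using q0 y0 by simp
    ultimately show False using rely by linarith
  qed
  have m1: "mu1 = q*mu2" unfolding q_def using m by simp
  have B1: "(mu1/y+mu2)*(mu2+y*mu1)^2/2 = S"
  proof -
    have k: "(1+e)*e = (1-e)*(q^2+e)" using rel by (simp add: algebra_simps power2_eq_square)
    have "(mu1/y+mu2)*(mu2+y*mu1)^2/2 = mu2^3*(q^2+e)*(1+e)^2/(2*e)"
      unfolding m1 y_def using q0 e0 m by (simp add: field_simps power2_eq_square power3_eq_cube)
    also have "\<dots> = mu2^3*(1-e^2)*(q^2+e)^2/(2*e^2)"
    proof -
      have "(q^2+e)*(1+e)^2*e = (1-e^2)*(q^2+e)^2"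
      proof -
        have "(q^2+e)*(1+e)^2*e = (q^2+e)*(1+e)*((1+e)*e)" by (simp add: power2_eq_square algebra_simps)
        also have "\<dots> = (q^2+e)*(1+e)*((1-e)*(q^2+e))" using k by simp
        also have "\<dots> = (1-e^2)*(q^2+e)^2" by (simp add: power2_eq_square algebra_simps)
        finally show ?thesis .
      qed
      note H = this
      have "mu2^3*(q^2+e)*(1+e)^2/(2*e) = mu2^3*((q^2+e)*(1+e)^2*e)/(2*e^2)"
        using e0 by (simp add: power2_eq_square)
      also have "\<dots> = mu2^3*((1-e^2)*(q^2+e)^2)/(2*e^2)" by (simp only: H)
      finally show ?thesis by (simp add: mult.assoc)
    qed
    also have "\<dots> = S" unfolding S_def m1 using m e0
      by (simp add: field_simps power2_eq_square power3_eq_cube)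
    finally show ?thesis .
  qed
  have Bform: "\<And>a b. (a/y+b)*(b+y*a)^2/2 = (a+b*y)*(b+a*y)^2/(2*y)"
    using y0 by (simp add: field_simps power2_eq_square)
  have B2: "(mu2/y+mu1)*(mu1+y*mu2)^2/2 \<le> (mu1/y+mu2)*(mu2+y*mu1)^2/2"
  proof -
    have "(mu2+mu1*y)*(mu1+mu2*y)^2 \<le> (mu1+mu2*y)*(mu2+mu1*y)^2"
    proof -
      have "(mu1+mu2*y)*(mu2+mu1*y)^2 - (mu2+mu1*y)*(mu1+mu2*y)^2
          = (mu1+mu2*y)*(mu2+mu1*y)*((mu2-mu1)*(1-y))"
        by (simp add: algebra_simps power2_eq_square)
      moreover have "(mu1+mu2*y)*(mu2+mu1*y)*((mu2-mu1)*(1-y)) \<ge> 0"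
        using m y0 y1 by (intro mult_nonneg_nonneg) auto
      ultimately show ?thesis by linarith
    qed
    thus ?thesis unfolding Bform using y0 by (simp add: divide_right_mono)
  qed
  have R1: "mu2/2 \<le> S"
  proof -
    have "mu2*y \<le> (mu1+mu2*y)*(mu2+mu1*y)^2"
      by (rule poly_rad) (use m y0 y1 in auto)
    hence "mu2*y/(2*y) \<le> (mu1+mu2*y)*(mu2+mu1*y)^2/(2*y)" using y0 by (simp add: pos_le_divide_eq mult.commute)
    hence "mu2/2 \<le> (mu1/y+mu2)*(mu2+y*mu1)^2/2" unfolding Bform using y0 by simp
    thus ?thesis using B1 by simp
  qed
  show ?thesis using y0 y1 R1 B1 B2 m by (intro exI[of _ y]) auto
qed



lemma nsq: "(norm (x::real^2))^2 = x$1^2 + x$2^2"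
  unfolding power2_norm_eq_inner by (simp add: inner_vec_def sum_2 power2_eq_square)

lemma angmom_le: "(kep_angmom x v)^2 \<le> (norm x)^2 * (norm v)^2"
proof -
  have "(norm x)^2 * (norm v)^2 - (kep_angmom x v)^2 = (x$1 * v$1 + x$2 * v$2)^2"
    unfolding nsq kep_angmom_def by (simp add: algebra_simps power2_eq_square)
  moreover have "0 \<le> (x$1 * v$1 + x$2 * v$2)^2" by simp
  ultimately show ?thesis by linarith
qed

lemma angmom_add: "kep_angmom x (u + w) = kep_angmom x u + kep_angmom x w"
  by (simp add: kep_angmom_def algebra_simps)
lemma angmom_diff: "kep_angmom x (u - w) = kep_angmom x u - kep_angmom x w"
  by (simp add: kep_angmom_def algebra_simps)
lemma angmom_scale: "kep_angmom x (c *\<^sub>R u) = c * kep_angmom x u"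
  by (simp add: kep_angmom_def algebra_simps)

lemma kin_id:
  fixes V w :: "real^2"
  assumes "m1 + m2 = 1"
  shows "m1*(norm (V + m2 *\<^sub>R w))^2 + m2*(norm (V - m1 *\<^sub>R w))^2 = (norm V)^2 + m1*m2*(norm w)^2"
proof -
  have m1: "m1 = 1 - m2" using assms by simp
  show ?thesis unfolding power2_norm_eq_inner m1
    by (simp add: inner_add_left inner_add_right inner_diff_left inner_diff_right inner_commute algebra_simps)
qed

lemma wprime:
  fixes w n :: "real^2"
  assumes "norm n = 1" "0 \<le> eps" "eps \<le> 1/2"
  shows "(norm ((w - (n \<bullet> w) *\<^sub>R n) - (1 - 2 * eps) *\<^sub>R ((n \<bullet> w) *\<^sub>R n)))^2 \<le> (norm w)^2"
proof -
  define k where "k = 2 - 2*eps"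
  have epsq: "eps*eps \<le> eps*1" using assms by (intro mult_left_mono) auto
  have nn: "n \<bullet> n = 1" using assms(1) by (metis norm_eq_1)
  have e: "(w - (n \<bullet> w) *\<^sub>R n) - (1 - 2 * eps) *\<^sub>R ((n \<bullet> w) *\<^sub>R n) = w - (k * (n \<bullet> w)) *\<^sub>R n"
    unfolding k_def by (simp add: vec_eq_iff algebra_simps)
  have "(norm (w - (k * (n \<bullet> w)) *\<^sub>R n))^2 = (norm w)^2 + (k*k - 2*k)*(n \<bullet> w)^2"
    unfolding power2_norm_eq_inner
    by (simp add: inner_diff_left inner_diff_right inner_commute nn algebra_simps power2_eq_square)
  moreover have "(k*k - 2*k) \<le> 0" unfolding k_def using epsq by (simp add: algebra_simps)
  moreover have "(k*k - 2*k)*(n \<bullet> w)^2 \<le> 0" using calculation(2) by (simp add: mult_nonpos_nonneg)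
  ultimately show ?thesis unfolding e by linarith
qed

lemma step_vals:
  fixes m1 m2 eps :: real and x v1 v2 n :: "real^2"
  assumes m: "m1 + m2 = 1" "m1 \<ge> 0" "m2 \<ge> 0" and ep: "0 \<le> eps" "eps \<le> 1/2" and n: "norm n = 1"
  defines "w \<equiv> v1 - v2"
  defines "w' \<equiv> (w - (n \<bullet> w) *\<^sub>R n) - (1 - 2 * eps) *\<^sub>R ((n \<bullet> w) *\<^sub>R n)"
  defines "V \<equiv> m1 *\<^sub>R v1 + m2 *\<^sub>R v2"
  shows "m1 * kep_angmom x (V + m2 *\<^sub>R w') + m2 * kep_angmom x (V - m1 *\<^sub>R w')
          = m1 * kep_angmom x v1 + m2 * kep_angmom x v2"
    and "m1 * kep_energy x (V + m2 *\<^sub>R w') + m2 * kep_energy x (V - m1 *\<^sub>R w')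
          \<le> m1 * kep_energy x v1 + m2 * kep_energy x v2"
proof -
  have m1: "m1 = 1 - m2" using m by simp
  show "m1 * kep_angmom x (V + m2 *\<^sub>R w') + m2 * kep_angmom x (V - m1 *\<^sub>R w')
          = m1 * kep_angmom x v1 + m2 * kep_angmom x v2"
    unfolding V_def angmom_add angmom_diff angmom_scale m1 by (simp add: algebra_simps)
  have v1: "v1 = V + m2 *\<^sub>R w" unfolding V_def w_def m1 by (simp add: algebra_simps)
  have v2: "v2 = V - m1 *\<^sub>R w" unfolding V_def w_def m1 by (simp add: algebra_simps)
  have en: "\<And>u1 u2. m1 * kep_energy x u1 + m2 * kep_energy x u2 = (m1*(norm u1)^2 + m2*(norm u2)^2)/2 - 1/norm x"
  proof -
    fix u1 u2 :: "real^2"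
    have "m1 * ((norm u1)^2/2 - 1/norm x) + m2 * ((norm u2)^2/2 - 1/norm x)
       = (m1*(norm u1)^2 + m2*(norm u2)^2)/2 - (m1+m2)*(1/norm x)" by (simp add: right_diff_distrib distrib_right add_divide_distrib)
    thus "m1 * kep_energy x u1 + m2 * kep_energy x u2 = (m1*(norm u1)^2 + m2*(norm u2)^2)/2 - 1/norm x"
      unfolding kep_energy_def m(1) by simp
  qed
  have "m1*m2*(norm w')^2 \<le> m1*m2*(norm w)^2"
    unfolding w'_def using wprime[OF n ep] m by (simp add: mult_left_mono)
  then have "m1*(norm (V + m2 *\<^sub>R w'))^2 + m2*(norm (V - m1 *\<^sub>R w'))^2 \<le> m1*(norm v1)^2 + m2*(norm v2)^2"
  proof -
    have kv: "m1*(norm v1)^2 + m2*(norm v2)^2 = (norm V)^2 + m1*m2*(norm w)^2"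
      by (subst v1, subst v2, rule kin_id[OF m(1)])
    show ?thesis unfolding kin_id[OF m(1)] kv using \<open>m1*m2*(norm w')^2 \<le> m1*m2*(norm w)^2\<close> by simp
  qed
  thus "m1 * kep_energy x (V + m2 *\<^sub>R w') + m2 * kep_energy x (V - m1 *\<^sub>R w')
          \<le> m1 * kep_energy x v1 + m2 * kep_energy x v2" unfolding en by simp
qed



lemma core:
  fixes mu1 mu2 S g y :: real and x v1 v2 :: "real^2"
  assumes m: "mu1>0" "mu2>0" "mu1+mu2=1" and y: "0<y" "y\<le>1" and g: "g>0"
    and S: "mu2/2 \<le> S" "mu1/2 \<le> S" "(mu1/y+mu2)*(mu2+y*mu1)^2/2 \<le> S"
           "(mu2/y+mu1)*(mu1+y*mu2)^2/2 \<le> S"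
    and x: "x \<noteq> 0"
    and big: "(mu1*kep_energy x v1 + mu2*kep_energy x v2)*(mu1*kep_angmom x v1 + mu2*kep_angmom x v2)^2 \<le> -(S+g)"
  shows "kep_energy x v1 * (kep_angmom x v1)^2 \<le> -((g/4)*(min 1 (g/10))^2)"
    and "kep_energy x v2 * (kep_angmom x v2)^2 \<le> -((g/4)*(min 1 (g/10))^2)"
proof -
  define r where "r = norm x"
  have r0: "r > 0" unfolding r_def using x by simp
  define sr where "sr = sqrt r"
  have sr0: "sr > 0" unfolding sr_def using r0 by simp
  have sr2: "sr^2 = r" unfolding sr_def using r0 by simp
  define P1 where "P1 = (norm v1)^2 * r"
  define P2 where "P2 = (norm v2)^2 * r"
  define L1 where "L1 = kep_angmom x v1"
  define L2 where "L2 = kep_angmom x v2"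
  define b1 where "b1 = L1 / sr"
  define b2 where "b2 = L2 / sr"
  have L1e: "L1 = sr*b1" unfolding b1_def using sr0 by simp
  have L2e: "L2 = sr*b2" unfolding b2_def using sr0 by simp
  have bP: "\<And>L (v::real^2). L^2 \<le> r^2*(norm v)^2 \<Longrightarrow> (L/sr)^2 \<le> (norm v)^2 * r"
  proof -
    fix L :: real and v :: "real^2"
    assume "L^2 \<le> r^2*(norm v)^2"
    hence "L^2/r \<le> r^2*(norm v)^2/r" using r0 by (simp add: divide_right_mono)
    moreover have "(L/sr)^2 = L^2/r" using sr2 by (simp add: power_divide)
    moreover have "r^2*(norm v)^2/r = (norm v)^2 * r" using r0 by (simp add: power2_eq_square)
    ultimately show "(L/sr)^2 \<le> (norm v)^2 * r" by simp
  qed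
  have "L1^2 \<le> r^2*(norm v1)^2" unfolding L1_def r_def by (rule angmom_le)
  from bP[OF this] have bP1: "b1^2 \<le> P1" unfolding b1_def P1_def .
  have "L2^2 \<le> r^2*(norm v2)^2" unfolding L2_def r_def by (rule angmom_le)
  from bP[OF this] have bP2: "b2^2 \<le> P2" unfolding b2_def P2_def .
  have Ee: "\<And>v. kep_energy x v = ((norm v)^2 * r/2 - 1)/r"
    unfolding kep_energy_def r_def using x by (simp add: field_simps)
  have E1e: "kep_energy x v1 = (P1/2 - 1)/r" unfolding Ee P1_def by simp
  have E2e: "kep_energy x v2 = (P2/2 - 1)/r" unfolding Ee P2_def by simp
  define D where "D = 1 - (mu1*P1+mu2*P2)/2"
  define M where "M = mu1*b1+mu2*b2"
  have Etot: "mu1*kep_energy x v1 + mu2*kep_energy x v2 = -D/r"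
  proof -
    have "mu1*((P1/2 - 1)/r) + mu2*((P2/2 - 1)/r) = (mu1*(P1/2 - 1) + mu2*(P2/2-1))/r"
      by (simp add: add_divide_distrib)
    also have "mu1*(P1/2 - 1) + mu2*(P2/2-1) = (mu1*P1+mu2*P2)/2 - (mu1+mu2)" by (simp add: algebra_simps)
    finally show ?thesis unfolding E1e E2e D_def using m(3) by (simp add: minus_divide_left)
  qed
  have Ltot: "mu1*kep_angmom x v1 + mu2*kep_angmom x v2 = sr*M"
    unfolding L1_def[symmetric] L2_def[symmetric] L1e L2e M_def by (simp add: algebra_simps)
  have "(mu1*kep_energy x v1 + mu2*kep_energy x v2)*(mu1*kep_angmom x v1 + mu2*kep_angmom x v2)^2 = -D*M^2"
    unfolding Etot Ltot power_mult_distrib sr2 using r0 by simp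
  hence "-D*M^2 \<le> -(S+g)" using big by simp
  hence "D*M^2 \<ge> S+g" by simp
  hence DM: "(1 - (mu1*P1+mu2*P2)/2) * (mu1*b1+mu2*b2)^2 \<ge> S + g" unfolding D_def M_def .
  have DM': "(1 - (mu2*P2+mu1*P1)/2) * (mu2*b2+mu1*b1)^2 \<ge> S + g" using DM by (simp add: add.commute)
  have "(P1/2 - 1)*b1^2 \<le> -((g/4)*(min 1 (g/10))^2)"
    by (rule quant[OF m y g S(1) S(3) bP1 bP2 DM])
  moreover have "kep_energy x v1 * (kep_angmom x v1)^2 = (P1/2 - 1)*b1^2"
    unfolding E1e L1_def[symmetric] L1e power_mult_distrib sr2 using r0 by simp
  ultimately show "kep_energy x v1 * (kep_angmom x v1)^2 \<le> -((g/4)*(min 1 (g/10))^2)" by simp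
  have m': "mu2>0" "mu1>0" "mu2+mu1=1" using m by auto
  have "(P2/2 - 1)*b2^2 \<le> -((g/4)*(min 1 (g/10))^2)"
    by (rule quant[OF m' y g S(2) S(4) bP2 bP1 DM'])
  moreover have "kep_energy x v2 * (kep_angmom x v2)^2 = (P2/2 - 1)*b2^2"
    unfolding E2e L2_def[symmetric] L2e power_mult_distrib sr2 using r0 by simp
  ultimately show "kep_energy x v2 * (kep_angmom x v2)^2 \<le> -((g/4)*(min 1 (g/10))^2)" by simp
qed



lemma L_bound_single:
  assumes "x \<noteq> 0" "kep_energy x v < 0"
  shows "(kep_angmom x v)^2 \<le> 2 * norm x"
proof -
  have r0: "norm x > 0" using assms by simp
  have "(norm v)^2 < 2 / norm x" using assms(2) unfolding kep_energy_def by simp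
  hence "(norm x)^2 * (norm v)^2 \<le> (norm x)^2 * (2 / norm x)" using r0 by (intro mult_left_mono) auto
  also have "\<dots> = 2 * norm x" using r0 by (simp add: power2_eq_square)
  finally show ?thesis using angmom_le[of x v] by linarith
qed

lemma r_bound:
  fixes mu1 mu2 s :: real
  assumes m: "mu1 > 0" "mu2 > 0" "mu1 + mu2 = 1" and x: "x \<noteq> 0" and s: "s > 0"
    and big: "(mu1*kep_energy x v1 + mu2*kep_energy x v2)*Lt^2 \<le> -s"
  shows "norm x \<le> Lt^2 / s"
proof -
  have r0: "norm x > 0" using x by simp
  have "kep_energy x v1 \<ge> -1/norm x" "kep_energy x v2 \<ge> -1/norm x" unfolding kep_energy_def by auto
  hence "mu1*kep_energy x v1 + mu2*kep_energy x v2 \<ge> mu1*(-1/norm x) + mu2*(-1/norm x)"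
    using m by (intro add_mono mult_left_mono) auto
  also have "mu1*(-1/norm x) + mu2*(-1/norm x) = (mu1+mu2)*(-1/norm x)" by (simp only: distrib_right)
  also have "\<dots> = -1/norm x" using m(3) by simp
  finally have "(-1/norm x)*Lt^2 \<le> (mu1*kep_energy x v1 + mu2*kep_energy x v2)*Lt^2"
    by (intro mult_right_mono) auto
  hence "-(Lt^2/norm x) \<le> -s" using big by simp
  hence "s \<le> Lt^2/norm x" by simp
  hence "s * norm x \<le> Lt^2" using r0 by (simp add: le_divide_eq)
  thus ?thesis using s by (simp add: le_divide_eq mult.commute)
qed

lemma state_bounds:
  fixes mu1 mu2 S g y :: real and x v1 v2 :: "real^2"
  assumes m: "mu1>0" "mu2>0" "mu1+mu2=1" and y: "0<y" "y\<le>1" and g: "g>0"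
    and S: "mu2/2 \<le> S" "mu1/2 \<le> S" "(mu1/y+mu2)*(mu2+y*mu1)^2/2 \<le> S"
           "(mu2/y+mu1)*(mu1+y*mu2)^2/2 \<le> S"
    and x: "x \<noteq> 0"
    and big: "(mu1*kep_energy x v1 + mu2*kep_energy x v2)*Lt^2 \<le> -(S+g)"
    and Lt: "mu1*kep_angmom x v1 + mu2*kep_angmom x v2 = Lt"
  shows "kep_energy x v1 < 0 \<and> \<bar>kep_angmom x v1\<bar> \<le> sqrt (2 * (Lt^2/(S+g)))
      \<and> kep_ecc x v1 \<le> sqrt (1 - 2*((g/4)*(min 1 (g/10))^2))"
    and "kep_energy x v2 < 0 \<and> \<bar>kep_angmom x v2\<bar> \<le> sqrt (2 * (Lt^2/(S+g)))
      \<and> kep_ecc x v2 \<le> sqrt (1 - 2*((g/4)*(min 1 (g/10))^2))"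
proof -
  define \<delta> where "\<delta> = (g/4)*(min 1 (g/10))^2"
  have d0: "\<delta> > 0" unfolding \<delta>_def using g by simp
  have Sg: "S + g > 0" using S m g by linarith
  have rb: "norm x \<le> Lt^2/(S+g)" by (rule r_bound[OF m x Sg big])
  have big': "(mu1*kep_energy x v1 + mu2*kep_energy x v2)*(mu1*kep_angmom x v1 + mu2*kep_angmom x v2)^2 \<le> -(S+g)"
    using big Lt by simp
  note c = core[OF m y g S x big']
  have gen: "kep_energy x v < 0 \<and> \<bar>kep_angmom x v\<bar> \<le> sqrt (2 * (Lt^2/(S+g)))
      \<and> kep_ecc x v \<le> sqrt (1 - 2*\<delta>)" if h: "kep_energy x v * (kep_angmom x v)^2 \<le> -\<delta>" for v
  proof (intro conjI)
    show E: "kep_energy x v < 0"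
    proof (rule ccontr)
      assume "\<not> kep_energy x v < 0"
      hence "kep_energy x v * (kep_angmom x v)^2 \<ge> 0" by simp
      thus False using h d0 by linarith
    qed
    have "(kep_angmom x v)^2 \<le> 2 * (Lt^2/(S+g))" using L_bound_single[OF x E] rb by linarith
    hence "sqrt ((kep_angmom x v)^2) \<le> sqrt (2 * (Lt^2/(S+g)))" by (rule real_sqrt_le_mono)
    thus "\<bar>kep_angmom x v\<bar> \<le> sqrt (2 * (Lt^2/(S+g)))" by simp
    show "kep_ecc x v \<le> sqrt (1 - 2*\<delta>)" unfolding kep_ecc_def using h by (intro real_sqrt_le_mono) linarith
  qed
  show "kep_energy x v1 < 0 \<and> \<bar>kep_angmom x v1\<bar> \<le> sqrt (2 * (Lt^2/(S+g)))
      \<and> kep_ecc x v1 \<le> sqrt (1 - 2*((g/4)*(min 1 (g/10))^2))" using gen[OF c(1)[folded \<delta>_def]] unfolding \<delta>_def .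
  show "kep_energy x v2 < 0 \<and> \<bar>kep_angmom x v2\<bar> \<le> sqrt (2 * (Lt^2/(S+g)))
      \<and> kep_ecc x v2 \<le> sqrt (1 - 2*((g/4)*(min 1 (g/10))^2))" using gen[OF c(2)[folded \<delta>_def]] unfolding \<delta>_def .
qed

lemma orbit_eq:
  assumes "(p, w) \<in> kep_orbit x v"
  shows "kep_orbit x v = kep_orbit p w" "p \<noteq> 0"
    "kep_energy p w = kep_energy x v" "kep_angmom p w = kep_angmom x v"
  using assms unfolding kep_orbit_def by auto



definition inv_st :: "real \<Rightarrow> real \<Rightarrow> real \<Rightarrow> real \<Rightarrow>
    (((real^2) \<times> (real^2)) set \<times> ((real^2) \<times> (real^2)) set) \<Rightarrow> bool" where
  "inv_st mu1 mu2 L0 s0 T \<longleftrightarrow> (\<exists>x u1 u2. x \<noteq> 0 \<and> T = (kep_orbit x u1, kep_orbit x u2) \<and>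
      mu1*kep_angmom x u1 + mu2*kep_angmom x u2 = L0 \<and>
      (mu1*kep_energy x u1 + mu2*kep_energy x u2)*L0^2 \<le> s0)"

lemma inv_step:
  fixes mu1 mu2 eps L0 s0 :: real
  assumes mm: "mu1 + mu2 = 1" "mu1 \<ge> 0" "mu2 \<ge> 0" and ep: "0 \<le> eps" "eps \<le> 1/2"
    and I0: "inv_st mu1 mu2 L0 s0 T" and st0: "orb_step mu1 mu2 eps T T'"
  shows "inv_st mu1 mu2 L0 s0 T'"
proof -
  from I0 obtain x u1 u2 where I: "x \<noteq> 0" "T = (kep_orbit x u1, kep_orbit x u2)"
    "mu1*kep_angmom x u1 + mu2*kep_angmom x u2 = L0"
    "(mu1*kep_energy x u1 + mu2*kep_energy x u2)*L0^2 \<le> s0" unfolding inv_st_def by blast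
  from st0 obtain z a1 a2 n where st: "(z, a1) \<in> fst T" "(z, a2) \<in> snd T" "norm n = 1"
    and T'0: "let w = a1 - a2;
           w' = (w - (n \<bullet> w) *\<^sub>R n) - (1 - 2 * eps) *\<^sub>R ((n \<bullet> w) *\<^sub>R n);
           v = mu1 *\<^sub>R a1 + mu2 *\<^sub>R a2
       in T' = (kep_orbit z (v + mu2 *\<^sub>R w'), kep_orbit z (v - mu1 *\<^sub>R w'))"
    unfolding orb_step_def by (elim exE conjE) (rule that, assumption+)
  have z1: "(z, a1) \<in> kep_orbit x u1" and z2: "(z, a2) \<in> kep_orbit x u2" using st(1,2) I(2) by auto
  note q1 = orbit_eq[OF z1] and q2 = orbit_eq[OF z2]
  define w where "w = a1 - a2"
  define w' where "w' = (w - (n \<bullet> w) *\<^sub>R n) - (1 - 2 * eps) *\<^sub>R ((n \<bullet> w) *\<^sub>R n)"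
  define V where "V = mu1 *\<^sub>R a1 + mu2 *\<^sub>R a2"
  have T': "T' = (kep_orbit z (V + mu2 *\<^sub>R w'), kep_orbit z (V - mu1 *\<^sub>R w'))"
    using T'0 unfolding Let_def w_def w'_def V_def by simp
  note sv = step_vals[OF mm ep st(3), of z a1 a2, folded w_def, folded w'_def V_def]
  have Lz: "mu1 * kep_angmom z (V + mu2 *\<^sub>R w') + mu2 * kep_angmom z (V - mu1 *\<^sub>R w') = L0"
    using sv(1) q1 q2 I(3) by simp
  have "mu1 * kep_energy z (V + mu2 *\<^sub>R w') + mu2 * kep_energy z (V - mu1 *\<^sub>R w')
        \<le> mu1*kep_energy x u1 + mu2*kep_energy x u2" using sv(2) q1 q2 by simp
  hence "(mu1 * kep_energy z (V + mu2 *\<^sub>R w') + mu2 * kep_energy z (V - mu1 *\<^sub>R w'))*L0^2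
        \<le> (mu1*kep_energy x u1 + mu2*kep_energy x u2)*L0^2" by (intro mult_right_mono) auto
  hence Ez: "(mu1 * kep_energy z (V + mu2 *\<^sub>R w') + mu2 * kep_energy z (V - mu1 *\<^sub>R w'))*L0^2 \<le> s0"
    using I(4) by linarith
  show ?thesis unfolding inv_st_def using q1(2) T' Lz Ez by blast
qed

lemma inv_reach:
  fixes mu1 mu2 eps L0 s0 :: real
  assumes mm: "mu1 + mu2 = 1" "mu1 \<ge> 0" "mu2 \<ge> 0" and ep: "0 \<le> eps" "eps \<le> 1/2"
    and r: "(orb_step mu1 mu2 eps)\<^sup>*\<^sup>* T0 T" and I0: "inv_st mu1 mu2 L0 s0 T0"
  shows "inv_st mu1 mu2 L0 s0 T"
  using r I0
proof (induction rule: rtranclp_induct)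
  case base
  then show ?case by simp
next
  case (step T T')
  then show ?case using inv_step[OF mm ep] by blast
qed

lemma inv_bounds:
  fixes mu1 mu2 S g y L0 :: real
  assumes m: "mu1>0" "mu2>0" "mu1+mu2=1" and y: "0<y" "y\<le>1" and g: "g>0"
    and S: "mu2/2 \<le> S" "mu1/2 \<le> S" "(mu1/y+mu2)*(mu2+y*mu1)^2/2 \<le> S"
           "(mu2/y+mu1)*(mu1+y*mu2)^2/2 \<le> S"
    and I0: "inv_st mu1 mu2 L0 (-(S+g)) (O1, O2)"
  shows "(\<forall>(y, w) \<in> O1. kep_energy y w < 0 \<and> \<bar>kep_angmom y w\<bar> \<le> sqrt (2 * (L0^2/(S+g)))
            \<and> kep_ecc y w \<le> sqrt (1 - 2*((g/4)*(min 1 (g/10))^2))) \<and>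
         (\<forall>(y, w) \<in> O2. kep_energy y w < 0 \<and> \<bar>kep_angmom y w\<bar> \<le> sqrt (2 * (L0^2/(S+g)))
            \<and> kep_ecc y w \<le> sqrt (1 - 2*((g/4)*(min 1 (g/10))^2)))"
proof -
  from I0 obtain x u1 u2 where I: "x \<noteq> 0" "(O1, O2) = (kep_orbit x u1, kep_orbit x u2)"
    "mu1*kep_angmom x u1 + mu2*kep_angmom x u2 = L0"
    "(mu1*kep_energy x u1 + mu2*kep_energy x u2)*L0^2 \<le> -(S+g)" unfolding inv_st_def by blast
  note sb = state_bounds[OF m y g S I(1) I(4) I(3)]
  have eqo: "\<And>y w u. (y, w) \<in> kep_orbit x u \<Longrightarrow> kep_energy y w = kep_energy x u \<and>
      kep_angmom y w = kep_angmom x u \<and> kep_ecc y w = kep_ecc x u"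
    unfolding kep_orbit_def kep_ecc_def by auto
  have O: "O1 = kep_orbit x u1" "O2 = kep_orbit x u2" using I(2) by auto
  show ?thesis unfolding O using sb eqo by fastforce
qed

theorem theorem1:
  fixes mu1 mu2 eps :: real and x1 v1 x2 v2 :: "real^2"
  assumes "mu1 > 0" "mu2 > 0" "mu1 + mu2 = 1" "mu1 \<le> mu2"
    and "0 \<le> eps" "eps \<le> 1/2"
    and "x1 \<noteq> 0" "x2 \<noteq> 0"
    and "\<exists>p w1 w2. (p, w1) \<in> kep_orbit x1 v1 \<and> (p, w2) \<in> kep_orbit x2 v2"
    and "kep_energy x1 v1 < 0" "kep_energy x2 v2 < 0"
    and "(mu1 * kep_energy x1 v1 + mu2 * kep_energy x2 v2) < 0"
    and "(mu1 * kep_energy x1 v1 + mu2 * kep_energy x2 v2)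
           * (mu1 * kep_angmom x1 v1 + mu2 * kep_angmom x2 v2)^2
         < (let q = mu1 / mu2;
                e = (sqrt (q^4 + 8 * q^2) - q^2) / 4
            in - ((1 - e^2) * (mu1^2 + mu2^2 * e)^2) / (2 * mu2 * e^2))"
  shows "\<exists>B c1 c2. c1 < 1 \<and> c2 < 1 \<and>
    (\<forall>O1 O2. (orb_step mu1 mu2 eps)\<^sup>*\<^sup>* (kep_orbit x1 v1, kep_orbit x2 v2) (O1, O2) \<longrightarrow>
       (\<forall>(y, w) \<in> O1. kep_energy y w < 0 \<and> \<bar>kep_angmom y w\<bar> \<le> B \<and> kep_ecc y w \<le> c1) \<and>
       (\<forall>(y, w) \<in> O2. kep_energy y w < 0 \<and> \<bar>kep_angmom y w\<bar> \<le> B \<and> kep_ecc y w \<le> c2))"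
proof -
  have m: "mu1 > 0" "mu2 > 0" "mu1 + mu2 = 1" using assms by auto
  have mm: "mu1 + mu2 = 1" "mu1 \<ge> 0" "mu2 \<ge> 0" using assms by auto
  obtain p w1 w2 where pw: "(p, w1) \<in> kep_orbit x1 v1" "(p, w2) \<in> kep_orbit x2 v2"
    using assms(9) by blast
  note o1 = orbit_eq[OF pw(1)] and o2 = orbit_eq[OF pw(2)]
  define L0 where "L0 = mu1 * kep_angmom x1 v1 + mu2 * kep_angmom x2 v2"
  define s0 where "s0 = (mu1 * kep_energy x1 v1 + mu2 * kep_energy x2 v2) * L0^2"
  define ee where "ee = (sqrt ((mu1/mu2)^4 + 8 * (mu1/mu2)^2) - (mu1/mu2)^2) / 4"
  define S where "S = ((1 - ee^2) * (mu1^2 + mu2^2 * ee)^2) / (2 * mu2 * ee^2)"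
  obtain y where yf: "0 < y" "y \<le> 1" "mu2/2 \<le> S" "mu1/2 \<le> S"
     "(mu1/y+mu2)*(mu2+y*mu1)^2/2 \<le> S" "(mu2/y+mu1)*(mu1+y*mu2)^2/2 \<le> S"
    using cst_facts[OF assms(1-4)] unfolding S_def ee_def by blast
  have rhs: "(let q = mu1 / mu2;
                e = (sqrt (q^4 + 8 * q^2) - q^2) / 4
            in - ((1 - e^2) * (mu1^2 + mu2^2 * e)^2) / (2 * mu2 * e^2)) = -S"
    unfolding Let_def S_def ee_def by (simp only: minus_divide_left)
  have sig: "s0 < -S" using assms(13) unfolding s0_def L0_def rhs .
  define g where "g = -s0 - S"
  have g0: "g > 0" unfolding g_def using sig by simp
  have s0g: "s0 = -(S+g)" unfolding g_def by simp
  have I0: "inv_st mu1 mu2 L0 (-(S+g)) (kep_orbit x1 v1, kep_orbit x2 v2)"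
    unfolding inv_st_def s0g[symmetric]
    by (rule exI[of _ p], rule exI[of _ w1], rule exI[of _ w2])
      (simp add: o1 o2 L0_def s0_def)
  define B where "B = sqrt (2 * (L0^2/(S+g)))"
  define c where "c = sqrt (1 - 2*((g/4)*(min 1 (g/10))^2))"
  have c1: "c < 1"
  proof -
    have "(g/4)*(min 1 (g/10))^2 > 0" using g0 by simp
    hence "1 - 2*((g/4)*(min 1 (g/10))^2) < 1" by simp
    thus ?thesis unfolding c_def by (metis real_sqrt_less_iff real_sqrt_one)
  qed
  have main: "\<forall>O1 O2. (orb_step mu1 mu2 eps)\<^sup>*\<^sup>* (kep_orbit x1 v1, kep_orbit x2 v2) (O1, O2) \<longrightarrow>
       (\<forall>(y, w) \<in> O1. kep_energy y w < 0 \<and> \<bar>kep_angmom y w\<bar> \<le> B \<and> kep_ecc y w \<le> c) \<and>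
       (\<forall>(y, w) \<in> O2. kep_energy y w < 0 \<and> \<bar>kep_angmom y w\<bar> \<le> B \<and> kep_ecc y w \<le> c)"
    unfolding B_def c_def
    using inv_bounds[OF m yf(1,2) g0 yf(3-6) inv_reach[OF mm assms(5,6) _ I0]] by blast
  show ?thesis using c1 main by blast
qed

end
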